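(* Assume $f_{\sigma,-1}\in H_{-\frac12}$. For any $u\in\mathcal{KN}$ with $u(0)\in\mathcal{A}$ and any $s>0$, the function $u_s(\cdot):=u(\cdot+s)$ belongs to $\mathcal{KN}$.
   Context: Setting: $\Omega\subset\mathbb{R}^3$ bounded with smooth boundary, $\nu>0$, $f\in L^2(\Omega)^3$; $H$, $V$ closures of $\{u\in C_0^\infty(\Omega)^3:\mathrm{div}\,u=0\}$ in $L^2(\Omega)^3$, $H^1_0(\Omega)^3$, $((u,v))=\sum_{i,j}\int\partial_iu_j\partial_iv_j$; $P$ Leray projection, $f_\sigma=Pf$, $A=P\Delta$ Stokes operator, $\lambda_1$ first eigenvalue of $-A$; $H_\alpha=D((-A)^\alpha)$ ($H_{1/2}=V$), $H_{-\alpha}=(H_\alpha)^*$ for $\alpha\in[0,1]$; $A_{-1}u(\phi)=\int_\Omega u\cdot A\phi$; $f_{\sigma,-1}:\phi\mapsto\int_\Omega f_\sigma\cdot\phi$. $S_N$ ($N>0$): $S_N(t)u_0=u(t)$ with $u\in C([0,\infty),H)\cap C((0,\infty),H_{3/8})$ the unique solution of $u(t)=e^{\nu A_{-1}t}u_0+\int_0^te^{\nu A_{-1}(t-s)}(G_N(u(s))+f_{\sigma,-1})ds$, where $G_N(u)(\phi)=\int_\Omega F_N(u)\sum_{i,j}u_iu_j\partial_i\phi_j$, $F_N(u)=\min\{1,N/\|u\|_{L^4}\}$. $B_0=\{u\in H:\|u\|_H^2\leqslant1+\|f_{\sigma,-1}\|^2_{H_{-1/2}}/(\lambda_1\nu^2)\}$.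 $\mathcal{A}$ = set of $y\in H$ such that there are $t_j\to\infty$, $\{u_0^j\}\subset B_0$, $N_j\to\infty$ with $S_{N_j}(t_j)u_0^j\to y$ weakly in $H$. $\mathcal{K}$: weak solutions, i.e. $u:[0,\infty)\to H$ with, for each $T>0$, $u\in L^\infty(0,T;H)\cap L^2(0,T;V)$, $du/dt\in L^1(0,T;V^* )$, $\frac{d}{dt}(u,\phi)=-\nu((u,\phi))+\int_\Omega\sum_{i,j}u_iu_j\partial_i\phi_j+\langle f_{\sigma,-1},\phi\rangle$ in $\mathcal{D}'(0,T)$, $\phi\in V$. $\mathcal{KN}$: $u\in\mathcal{K}$ such that either (1) $u(0)\in\mathcal{A}$ and there are $t_j\to\infty$, $\{u_0^j\}\subset B_0$, $N_j\to\infty$ with $S_{N_j}(s_j+t_j)u_0^j\to u(t_0)$ weakly in $H$ for every $t_0\ge0$ and every $[0,\infty)\ni s_j\to t_0$; or (2) $u(0)\in H\setminus\mathcal{A}$ and there is $N_j\to\infty$ with $S_{N_j}(s_j)u(0)\to u(t_0)$ weakly in $H$ for every $t_0\ge0$ and $[0,\infty)\ni s_j\to t_0$. *)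

theory Defs
  imports "HOL-Analysis.Analysis"
begin

type_synonym field3 = "real^3 \<Rightarrow> real^3"

definition tsupp :: "('a::topological_space \<Rightarrow> 'b::zero) \<Rightarrow> 'a set" where
  "tsupp g = closure {x. g x \<noteq> 0}"

definition pd3 :: "3 \<Rightarrow> (real^3 \<Rightarrow> real) \<Rightarrow> real^3 \<Rightarrow> real" where
  "pd3 i g x = deriv (\<lambda>t. g (x + t *\<^sub>R axis i 1)) 0"

fun iter_pd :: "3 list \<Rightarrow> (real^3 \<Rightarrow> real) \<Rightarrow> real^3 \<Rightarrow> real" where
  "iter_pd [] g = g"
| "iter_pd (i # is) g = pd3 i (iter_pd is g)"

text \<open>C-infinity on R^3: all iterated partial derivatives exist and are (Frechet) differentiable.\<close>
definition smooth3 :: "(real^3 \<Rightarrow> real) \<Rightarrow> bool" where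
  "smooth3 g \<longleftrightarrow> (\<forall>is x. iter_pd is g differentiable (at x))"

definition test_scalar :: "(real^3) set \<Rightarrow> (real^3 \<Rightarrow> real) \<Rightarrow> bool" where
  "test_scalar \<Omega> \<psi> \<longleftrightarrow> smooth3 \<psi> \<and> compact (tsupp \<psi>) \<and> tsupp \<psi> \<subseteq> \<Omega>"

definition test_df :: "(real^3) set \<Rightarrow> field3 \<Rightarrow> bool" where
  "test_df \<Omega> \<phi> \<longleftrightarrow> (\<forall>j. test_scalar \<Omega> (\<lambda>x. \<phi> x $ j)) \<and>
     (\<forall>x. (\<Sum>i\<in>UNIV. pd3 i (\<lambda>y. \<phi> y $ i) x) = 0)"

definition smooth_bounded_domain :: "(real^3) set \<Rightarrow> bool" where
  "smooth_bounded_domain \<Omega> \<longleftrightarrow> open \<Omega> \<and> bounded \<Omega> \<and> \<Omega> \<noteq> {} \<and>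
     (\<forall>p\<in>frontier \<Omega>. \<exists>r>0. \<exists>\<rho>. smooth3 \<rho> \<and>
        \<Omega> \<inter> ball p r = {x\<in>ball p r. \<rho> x < 0} \<and>
        (\<forall>x\<in>ball p r. \<rho> x = 0 \<longrightarrow> (\<exists>i. pd3 i \<rho> x \<noteq> 0)))"

definition test_time :: "real \<Rightarrow> (real \<Rightarrow> real) \<Rightarrow> bool" where
  "test_time T \<psi> \<longleftrightarrow> (\<forall>n x. (deriv ^^ n) \<psi> differentiable (at x)) \<and>
     compact (tsupp \<psi>) \<and> tsupp \<psi> \<subseteq> {0<..<T}"

definition L2field :: "(real^3) set \<Rightarrow> field3 \<Rightarrow> bool" where
  "L2field \<Omega> u \<longleftrightarrow> set_borel_measurable lebesgue \<Omega> u \<and>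
     set_integrable lebesgue \<Omega> (\<lambda>x. (norm (u x))^2)"

definition L2s :: "(real^3) set \<Rightarrow> (real^3 \<Rightarrow> real) \<Rightarrow> bool" where
  "L2s \<Omega> h \<longleftrightarrow> set_borel_measurable lebesgue \<Omega> h \<and>
     set_integrable lebesgue \<Omega> (\<lambda>x. (h x)^2)"

definition l2ip :: "(real^3) set \<Rightarrow> field3 \<Rightarrow> field3 \<Rightarrow> real" where
  "l2ip \<Omega> u v = (LINT x:\<Omega>|lebesgue. u x \<bullet> v x)"

definition l2norm :: "(real^3) set \<Rightarrow> field3 \<Rightarrow> real" where
  "l2norm \<Omega> u = sqrt (l2ip \<Omega> u u)"

definition weak_pd :: "(real^3) set \<Rightarrow> 3 \<Rightarrow> (real^3 \<Rightarrow> real) \<Rightarrow> (real^3 \<Rightarrow> real) \<Rightarrow> bool" where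
  "weak_pd \<Omega> i g h \<longleftrightarrow> (\<forall>\<psi>. test_scalar \<Omega> \<psi> \<longrightarrow>
     (LINT x:\<Omega>|lebesgue. g x * pd3 i \<psi> x) = - (LINT x:\<Omega>|lebesgue. h x * \<psi> x))"

definition H1field :: "(real^3) set \<Rightarrow> field3 \<Rightarrow> bool" where
  "H1field \<Omega> u \<longleftrightarrow> L2field \<Omega> u \<and> (\<forall>i j. \<exists>h. L2s \<Omega> h \<and> weak_pd \<Omega> i (\<lambda>x. u x $ j) h)"

definition wgrad :: "(real^3) set \<Rightarrow> field3 \<Rightarrow> 3 \<Rightarrow> 3 \<Rightarrow> real^3 \<Rightarrow> real" where
  "wgrad \<Omega> u i j = (SOME h. L2s \<Omega> h \<and> weak_pd \<Omega> i (\<lambda>x. u x $ j) h)"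

definition dir :: "(real^3) set \<Rightarrow> field3 \<Rightarrow> field3 \<Rightarrow> real" where
  "dir \<Omega> u v = (\<Sum>i\<in>UNIV. \<Sum>j\<in>UNIV. LINT x:\<Omega>|lebesgue. wgrad \<Omega> u i j x * wgrad \<Omega> v i j x)"

definition Hsp :: "(real^3) set \<Rightarrow> field3 set" where
  "Hsp \<Omega> = {u. L2field \<Omega> u \<and> (\<exists>\<phi>. (\<forall>n. test_df \<Omega> (\<phi> n)) \<and>
      (\<lambda>n. l2norm \<Omega> (\<lambda>x. u x - \<phi> n x)) \<longlonglongrightarrow> 0)}"

definition Vsp :: "(real^3) set \<Rightarrow> field3 set" where
  "Vsp \<Omega> = {u. H1field \<Omega> u \<and> (\<exists>\<phi>. (\<forall>n. test_df \<Omega> (\<phi> n)) \<and>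
      (\<lambda>n. l2norm \<Omega> (\<lambda>x. u x - \<phi> n x)
            + sqrt (dir \<Omega> (\<lambda>x. u x - \<phi> n x) (\<lambda>x. u x - \<phi> n x))) \<longlonglongrightarrow> 0)}"

definition leray :: "(real^3) set \<Rightarrow> field3 \<Rightarrow> field3" where
  "leray \<Omega> f = (SOME g. g \<in> Hsp \<Omega> \<and> (\<forall>h\<in>Hsp \<Omega>. l2ip \<Omega> (\<lambda>x. f x - g x) h = 0))"

text \<open>-A w = lam w, with A the Stokes operator (operator of the form ((.,.)) on V).\<close>
definition stokes_eig :: "(real^3) set \<Rightarrow> field3 \<Rightarrow> real \<Rightarrow> bool" where
  "stokes_eig \<Omega> w lam \<longleftrightarrow> w \<in> Vsp \<Omega> \<and> l2norm \<Omega> w \<noteq> 0 \<and>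
     (\<forall>\<phi>\<in>Vsp \<Omega>. dir \<Omega> w \<phi> = lam * l2ip \<Omega> w \<phi>)"

definition lambda1 :: "(real^3) set \<Rightarrow> real" where
  "lambda1 \<Omega> = Inf {lam. \<exists>w. stokes_eig \<Omega> w lam}"

definition stokes_basis :: "(real^3) set \<Rightarrow> (nat \<Rightarrow> field3) \<Rightarrow> (nat \<Rightarrow> real) \<Rightarrow> bool" where
  "stokes_basis \<Omega> w lam \<longleftrightarrow> (\<forall>k. stokes_eig \<Omega> (w k) (lam k)) \<and>
     (\<forall>k l. l2ip \<Omega> (w k) (w l) = (if k = l then 1 else 0)) \<and>
     (\<forall>u\<in>Hsp \<Omega>. (\<lambda>k. (l2ip \<Omega> u (w k))^2) sums ((l2norm \<Omega> u)^2))"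

definition some_basis :: "(real^3) set \<Rightarrow> (nat \<Rightarrow> field3) \<times> (nat \<Rightarrow> real)" where
  "some_basis \<Omega> = (SOME p. stokes_basis \<Omega> (fst p) (snd p))"

text \<open>H_alpha = D((-A)^alpha) and its norm, via the eigen-expansion.\<close>
definition Halpha :: "(real^3) set \<Rightarrow> real \<Rightarrow> field3 set" where
  "Halpha \<Omega> \<alpha> = {u \<in> Hsp \<Omega>. summable (\<lambda>k. snd (some_basis \<Omega>) k powr (2*\<alpha>)
        * (l2ip \<Omega> u (fst (some_basis \<Omega>) k))^2)}"

definition Halpha_norm :: "(real^3) set \<Rightarrow> real \<Rightarrow> field3 \<Rightarrow> real" where
  "Halpha_norm \<Omega> \<alpha> u = sqrt (\<Sum>k. snd (some_basis \<Omega>) k powr (2*\<alpha>)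
        * (l2ip \<Omega> u (fst (some_basis \<Omega>) k))^2)"

text \<open>f_{sigma,-1} in H_{-1/2} = (H_{1/2})^*, H_{1/2}-norm of phi = sqrt((phi,phi)).\<close>
definition fsig_bounded :: "(real^3) set \<Rightarrow> field3 \<Rightarrow> bool" where
  "fsig_bounded \<Omega> f \<longleftrightarrow> bdd_above {\<bar>l2ip \<Omega> (leray \<Omega> f) \<phi>\<bar> | \<phi>. \<phi> \<in> Vsp \<Omega> \<and> dir \<Omega> \<phi> \<phi> \<le> 1}"

definition fsig_norm :: "(real^3) set \<Rightarrow> field3 \<Rightarrow> real" where
  "fsig_norm \<Omega> f = Sup {\<bar>l2ip \<Omega> (leray \<Omega> f) \<phi>\<bar> | \<phi>. \<phi> \<in> Vsp \<Omega> \<and> dir \<Omega> \<phi> \<phi> \<le> 1}"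

definition l4norm :: "(real^3) set \<Rightarrow> field3 \<Rightarrow> real" where
  "l4norm \<Omega> u = (LINT x:\<Omega>|lebesgue. (norm (u x))^4) powr (1/4)"

definition FN :: "(real^3) set \<Rightarrow> real \<Rightarrow> field3 \<Rightarrow> real" where
  "FN \<Omega> N u = (if l4norm \<Omega> u = 0 then 1 else min 1 (N / l4norm \<Omega> u))"

definition bform :: "(real^3) set \<Rightarrow> field3 \<Rightarrow> field3 \<Rightarrow> real" where
  "bform \<Omega> u \<phi> = (\<Sum>i\<in>UNIV. \<Sum>j\<in>UNIV. LINT x:\<Omega>|lebesgue. u x $ i * u x $ j * wgrad \<Omega> \<phi> i j x)"

definition GN :: "(real^3) set \<Rightarrow> real \<Rightarrow> field3 \<Rightarrow> field3 \<Rightarrow> real" where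
  "GN \<Omega> N u \<phi> = FN \<Omega> N u * bform \<Omega> u \<phi>"

text \<open>u is the solution t |-> S_N(t) u0 of the mild equation, in the class
  C([0,oo),H) \<inter> C((0,oo),H_{3/8}); the H_{-1}-valued mild equation is expressed by
  testing it against every eigenfunction w of -A (eigenvalue lam), on which
  e^{nu A_{-1} t} acts as multiplication by exp(-nu lam t).\<close>
definition mild_sol :: "(real^3) set \<Rightarrow> real \<Rightarrow> field3 \<Rightarrow> real \<Rightarrow> field3 \<Rightarrow> (real \<Rightarrow> field3) \<Rightarrow> bool" where
  "mild_sol \<Omega> \<nu> f N u0 u \<longleftrightarrow> u0 \<in> Hsp \<Omega> \<and>
     (\<forall>t\<ge>0. u t \<in> Hsp \<Omega>) \<and> l2norm \<Omega> (\<lambda>x. u 0 x - u0 x) = 0 \<and>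
     (\<forall>t\<ge>0. ((\<lambda>s. l2norm \<Omega> (\<lambda>x. u s x - u t x)) \<longlongrightarrow> 0) (at t within {0..})) \<and>
     (\<forall>t>0. u t \<in> Halpha \<Omega> (3/8)) \<and>
     (\<forall>t>0. ((\<lambda>s. Halpha_norm \<Omega> (3/8) (\<lambda>x. u s x - u t x)) \<longlongrightarrow> 0) (at t within {0<..})) \<and>
     (\<forall>w lam. stokes_eig \<Omega> w lam \<longrightarrow> (\<forall>t\<ge>0.
        set_integrable lborel {0..t}
          (\<lambda>s. exp (-\<nu>*lam*(t-s)) * (GN \<Omega> N (u s) w + l2ip \<Omega> (leray \<Omega> f) w)) \<and>
        l2ip \<Omega> (u t) w = exp (-\<nu>*lam*t) * l2ip \<Omega> u0 w
          + (LINT s:{0..t}|lborel. exp (-\<nu>*lam*(t-s)) * (GN \<Omega> N (u s) w + l2ip \<Omega> (leray \<Omega> f) w))))"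

definition wconv :: "(real^3) set \<Rightarrow> (nat \<Rightarrow> field3) \<Rightarrow> field3 \<Rightarrow> bool" where
  "wconv \<Omega> x y \<longleftrightarrow> y \<in> Hsp \<Omega> \<and> (\<forall>h\<in>Hsp \<Omega>. (\<lambda>j. l2ip \<Omega> (x j) h) \<longlonglongrightarrow> l2ip \<Omega> y h)"

definition B0 :: "(real^3) set \<Rightarrow> real \<Rightarrow> field3 \<Rightarrow> field3 set" where
  "B0 \<Omega> \<nu> f = {u \<in> Hsp \<Omega>. (l2norm \<Omega> u)^2 \<le> 1 + (fsig_norm \<Omega> f)^2 / (lambda1 \<Omega> * \<nu>^2)}"

definition attractor :: "(real^3) set \<Rightarrow> real \<Rightarrow> field3 \<Rightarrow> field3 set" where
  "attractor \<Omega> \<nu> f = {y \<in> Hsp \<Omega>. \<exists>(t::nat \<Rightarrow> real) (u0::nat \<Rightarrow> field3) (Ns::nat \<Rightarrow> real)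
      (S::nat \<Rightarrow> real \<Rightarrow> field3).
      (\<forall>j. t j \<ge> 0) \<and> filterlim t at_top sequentially \<and>
      (\<forall>j. u0 j \<in> B0 \<Omega> \<nu> f) \<and> (\<forall>j. Ns j > 0) \<and> filterlim Ns at_top sequentially \<and>
      (\<forall>j. mild_sol \<Omega> \<nu> f (Ns j) (u0 j) (S j)) \<and>
      wconv \<Omega> (\<lambda>j. S j (t j)) y}"

definition Vdual_norm :: "(real^3) set \<Rightarrow> (field3 \<Rightarrow> real) \<Rightarrow> real" where
  "Vdual_norm \<Omega> g = Sup {\<bar>g \<phi>\<bar> | \<phi>. \<phi> \<in> Vsp \<Omega> \<and> dir \<Omega> \<phi> \<phi> \<le> 1}"

definition weak_sols :: "(real^3) set \<Rightarrow> real \<Rightarrow> field3 \<Rightarrow> (real \<Rightarrow> field3) set" where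
  "weak_sols \<Omega> \<nu> f = {u. \<forall>T>0.
     \<comment> \<open>u in L^infinity(0,T;H)\<close>
     (\<forall>t\<in>{0..T}. u t \<in> Hsp \<Omega>) \<and>
     (\<forall>h\<in>Hsp \<Omega>. (\<lambda>t. l2ip \<Omega> (u t) h) \<in> borel_measurable (lebesgue_on {0..T})) \<and>
     (\<exists>C. AE t in lebesgue_on {0..T}. l2norm \<Omega> (u t) \<le> C) \<and>
     \<comment> \<open>u in L^2(0,T;V)\<close>
     (AE t in lebesgue_on {0..T}. u t \<in> Vsp \<Omega>) \<and>
     (\<forall>\<phi>\<in>Vsp \<Omega>. (\<lambda>t. dir \<Omega> (u t) \<phi>) \<in> borel_measurable (lebesgue_on {0..T})) \<and>
     integrable (lebesgue_on {0..T}) (\<lambda>t. dir \<Omega> (u t) (u t)) \<and>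
     \<comment> \<open>du/dt in L^1(0,T;V^*) (distributional derivative)\<close>
     (\<exists>g::real \<Rightarrow> field3 \<Rightarrow> real.
        (\<forall>t a b \<phi>1 \<phi>2. \<phi>1 \<in> Vsp \<Omega> \<longrightarrow> \<phi>2 \<in> Vsp \<Omega> \<longrightarrow>
            g t (\<lambda>x. a *\<^sub>R \<phi>1 x + b *\<^sub>R \<phi>2 x) = a * g t \<phi>1 + b * g t \<phi>2) \<and>
        (\<forall>t. bdd_above {\<bar>g t \<phi>\<bar> | \<phi>. \<phi> \<in> Vsp \<Omega> \<and> dir \<Omega> \<phi> \<phi> \<le> 1}) \<and>
        (\<forall>\<phi>\<in>Vsp \<Omega>. (\<lambda>t. g t \<phi>) \<in> borel_measurable (lebesgue_on {0..T})) \<and>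
        integrable (lebesgue_on {0..T}) (\<lambda>t. Vdual_norm \<Omega> (g t)) \<and>
        (\<forall>\<phi>\<in>Vsp \<Omega>. \<forall>\<psi>. test_time T \<psi> \<longrightarrow>
            (\<integral>t. l2ip \<Omega> (u t) \<phi> * deriv \<psi> t \<partial>lebesgue_on {0..T})
              = - (\<integral>t. g t \<phi> * \<psi> t \<partial>lebesgue_on {0..T}))) \<and>
     \<comment> \<open>the weak Navier-Stokes equation in D'(0,T)\<close>
     (\<forall>\<phi>\<in>Vsp \<Omega>. \<forall>\<psi>. test_time T \<psi> \<longrightarrow>
        integrable (lebesgue_on {0..T})
          (\<lambda>t. (- \<nu> * dir \<Omega> (u t) \<phi> + bform \<Omega> (u t) \<phi> + l2ip \<Omega> (leray \<Omega> f) \<phi>) * \<psi> t) \<and>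
        - (\<integral>t. l2ip \<Omega> (u t) \<phi> * deriv \<psi> t \<partial>lebesgue_on {0..T})
          = (\<integral>t. (- \<nu> * dir \<Omega> (u t) \<phi> + bform \<Omega> (u t) \<phi> + l2ip \<Omega> (leray \<Omega> f) \<phi>) * \<psi> t
               \<partial>lebesgue_on {0..T}))}"

definition KN :: "(real^3) set \<Rightarrow> real \<Rightarrow> field3 \<Rightarrow> (real \<Rightarrow> field3) set" where
  "KN \<Omega> \<nu> f = {u \<in> weak_sols \<Omega> \<nu> f.
     (u 0 \<in> attractor \<Omega> \<nu> f \<and>
       (\<exists>(t::nat \<Rightarrow> real) (u0::nat \<Rightarrow> field3) (Ns::nat \<Rightarrow> real) (S::nat \<Rightarrow> real \<Rightarrow> field3).
         (\<forall>j. t j \<ge> 0) \<and> filterlim t at_top sequentially \<and>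
         (\<forall>j. u0 j \<in> B0 \<Omega> \<nu> f) \<and> (\<forall>j. Ns j > 0) \<and> filterlim Ns at_top sequentially \<and>
         (\<forall>j. mild_sol \<Omega> \<nu> f (Ns j) (u0 j) (S j)) \<and>
         (\<forall>t0\<ge>0. \<forall>s::nat \<Rightarrow> real. (\<forall>j. s j \<ge> 0) \<and> s \<longlonglongrightarrow> t0 \<longrightarrow>
            wconv \<Omega> (\<lambda>j. S j (s j + t j)) (u t0))))
   \<or> (u 0 \<in> Hsp \<Omega> - attractor \<Omega> \<nu> f \<and>
       (\<exists>(Ns::nat \<Rightarrow> real) (S::nat \<Rightarrow> real \<Rightarrow> field3).
         (\<forall>j. Ns j > 0) \<and> filterlim Ns at_top sequentially \<and>
         (\<forall>j. mild_sol \<Omega> \<nu> f (Ns j) (u 0) (S j)) \<and>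
         (\<forall>t0\<ge>0. \<forall>s::nat \<Rightarrow> real. (\<forall>j. s j \<ge> 0) \<and> s \<longlonglongrightarrow> t0 \<longrightarrow>
            wconv \<Omega> (\<lambda>j. S j (s j)) (u t0))))}"

end

theory Submission
  imports Defs
begin


lemma tr_meas_fun: "(\<lambda>x::real. x + c) \<in> lebesgue \<rightarrow>\<^sub>M lebesgue"
proof -
  have "(\<lambda>x::real. c + (\<Sum>j\<in>Basis. ((\<lambda>_. 1::real) j * (x \<bullet> j)) *\<^sub>R j)) \<in> lebesgue \<rightarrow>\<^sub>M lebesgue"
    by (rule lebesgue_affine_measurable) auto
  moreover have "(\<lambda>x::real. c + (\<Sum>j\<in>Basis. ((\<lambda>_. 1::real) j * (x \<bullet> j)) *\<^sub>R j)) = (\<lambda>x. x + c)"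
    by auto
  ultimately show ?thesis by simp
qed

lemma leb_distr: "distr lebesgue lebesgue (\<lambda>x::real. x + c) = lebesgue"
proof -
  have "lebesgue = density (distr lebesgue lebesgue (\<lambda>x::real. c + 1 * x)) (\<lambda>_. ennreal (abs 1))"
    by (rule lebesgue_real_affine) simp
  also have "\<dots> = distr lebesgue lebesgue (\<lambda>x::real. x + c)"
    by (simp add: density_1 add.commute)
  finally show ?thesis by simp
qed

lemma tr_int:
  fixes G :: "real \<Rightarrow> real"
  assumes "integrable lebesgue G"
  shows "integrable lebesgue (\<lambda>x. G (x + c))"
proof -
  have "integrable (distr lebesgue lebesgue (\<lambda>x::real. x + c)) G"
    unfolding leb_distr by (rule assms)
  then show ?thesis by (rule integrable_distr[OF tr_meas_fun])
qed

lemma tr_meas: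
  fixes G :: "real \<Rightarrow> real"
  assumes "G \<in> borel_measurable lebesgue"
  shows "(\<lambda>x. G (x + c)) \<in> borel_measurable lebesgue"
  using measurable_compose[OF tr_meas_fun assms] by (simp add: o_def)

lemma tr_int_iff:
  fixes G :: "real \<Rightarrow> real"
  shows "integrable lebesgue (\<lambda>x. G (x + c)) \<longleftrightarrow> integrable lebesgue G"
proof
  assume "integrable lebesgue (\<lambda>x. G (x + c))"
  from tr_int[OF this, of "-c"] show "integrable lebesgue G" by simp
qed (rule tr_int)

lemma tr_integral:
  fixes G :: "real \<Rightarrow> real"
  shows "integral\<^sup>L lebesgue (\<lambda>x. G (x + c)) = integral\<^sup>L lebesgue G"
proof (cases "G \<in> borel_measurable lebesgue")
  case True
  have "integral\<^sup>L (distr lebesgue lebesgue (\<lambda>x::real. x + c)) G = integral\<^sup>L lebesgue (\<lambda>x. G (x + c))"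
    by (rule integral_distr[OF tr_meas_fun True])
  then show ?thesis unfolding leb_distr by simp
next
  case False
  then have "\<not> integrable lebesgue G" by auto
  moreover then have "\<not> integrable lebesgue (\<lambda>x. G (x + c))" using tr_int_iff by blast
  ultimately show ?thesis by (simp add: not_integrable_integral_eq)
qed

lemma tr_AE:
  assumes "AE x in lebesgue. P (x::real)"
  shows "AE x in lebesgue. P (x + c)"
proof -
  have "AE x in distr lebesgue lebesgue (\<lambda>x::real. x + c). P x" unfolding leb_distr by (rule assms)
  from AE_distrD[OF tr_meas_fun this] show ?thesis .
qed

lemma Icc_leb: "{a..b::real} \<in> sets lebesgue"
  by (metis lmeasurable_cbox fmeasurableD box_real(2))

lemma SI_meas:
  fixes F :: "real \<Rightarrow> real"
  assumes "F \<in> borel_measurable (lebesgue_on {0..T+s})" "s \<ge> 0"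
  shows "(\<lambda>t. F (t+s)) \<in> borel_measurable (lebesgue_on {0..T})"
proof -
  have "(\<lambda>x. indicator {0..T+s} x *\<^sub>R F x) \<in> borel_measurable lebesgue"
    using assms(1) by (subst (asm) borel_measurable_restrict_space_iff) auto
  from tr_meas[OF this, of s] have m: "(\<lambda>x. indicator {0..T+s} (x+s) *\<^sub>R F (x+s)) \<in> borel_measurable lebesgue" .
  have "(\<lambda>x. indicator {0..T} x * (indicator {0..T+s} (x+s) *\<^sub>R F (x+s))) \<in> borel_measurable lebesgue"
    by (intro borel_measurable_times borel_measurable_indicator m) auto
  moreover have "(\<lambda>x. indicator {0..T} x * (indicator {0..T+s} (x+s) *\<^sub>R F (x+s))) = (\<lambda>x. indicator {0..T} x *\<^sub>R F (x+s))"
    using assms(2) by (auto simp: indicator_def fun_eq_iff)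
  ultimately show ?thesis by (subst borel_measurable_restrict_space_iff) auto
qed

lemma SI_AE:
  fixes T s :: real
  assumes "AE t in lebesgue_on {0..T+s}. P t" "s \<ge> 0"
  shows "AE t in lebesgue_on {0..T}. P (t + s)"
proof -
  have "AE x in lebesgue. x \<in> {0..T+s} \<longrightarrow> P x"
    using assms(1) by (subst (asm) AE_restrict_space_iff) (auto simp: Icc_leb)
  from tr_AE[OF this, of s] have "AE x in lebesgue. x + s \<in> {0..T+s} \<longrightarrow> P (x + s)" .
  then have "AE x in lebesgue. x \<in> {0..T} \<longrightarrow> P (x + s)"
    by eventually_elim (use assms(2) in auto)
  then show ?thesis by (subst AE_restrict_space_iff) (auto simp: Icc_leb)
qed

lemma SI_int:
  fixes F :: "real \<Rightarrow> real"
  assumes "integrable (lebesgue_on {0..T+s}) F" "s \<ge> 0"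
  shows "integrable (lebesgue_on {0..T}) (\<lambda>t. F (t+s))"
proof -
  have "integrable lebesgue (\<lambda>x. indicator {0..T+s} x *\<^sub>R F x)"
    using assms(1) by (subst (asm) integrable_restrict_space) auto
  from tr_int[OF this, of s] have m: "integrable lebesgue (\<lambda>x. indicator {0..T+s} (x+s) *\<^sub>R F (x+s))" .
  have "integrable lebesgue (\<lambda>x. indicator {0..T} x *\<^sub>R (indicator {0..T+s} (x+s) *\<^sub>R F (x+s)))"
    by (rule integrable_mult_indicator[OF _ m]) auto
  moreover have "(\<lambda>x. indicator {0..T} x *\<^sub>R (indicator {0..T+s} (x+s) *\<^sub>R F (x+s))) = (\<lambda>x. indicator {0..T} x *\<^sub>R F (x+s))"
    using assms(2) by (auto simp: indicator_def fun_eq_iff)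
  ultimately show ?thesis by (subst integrable_restrict_space) auto
qed

lemma SI_integral:
  fixes F :: "real \<Rightarrow> real"
  assumes "\<And>t. 0 \<le> t \<Longrightarrow> t < s \<Longrightarrow> F t = 0" "s \<ge> 0"
  shows "integral\<^sup>L (lebesgue_on {0..T}) (\<lambda>t. F (t+s)) = integral\<^sup>L (lebesgue_on {0..T+s}) F"
proof -
  have eq: "(\<lambda>x. indicator {0..T} x *\<^sub>R F (x+s)) = (\<lambda>x. indicator {0..T+s} (x+s) *\<^sub>R F (x+s))"
  proof
    fix x
    show "indicator {0..T} x *\<^sub>R F (x+s) = indicator {0..T+s} (x+s) *\<^sub>R F (x+s)"
    proof (cases "x < 0 \<and> 0 \<le> x + s")
      case True
      then have "F (x+s) = 0" using assms(1)[of "x+s"] by auto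
      then show ?thesis by simp
    next
      case False
      then show ?thesis using assms(2) by (auto simp: indicator_def)
    qed
  qed
  have "integral\<^sup>L (lebesgue_on {0..T}) (\<lambda>t. F (t+s)) = integral\<^sup>L lebesgue (\<lambda>x. indicator {0..T} x *\<^sub>R F (x+s))"
    by (subst integral_restrict_space) auto
  also have "\<dots> = integral\<^sup>L lebesgue (\<lambda>x. indicator {0..T+s} (x+s) *\<^sub>R F (x+s))" by (simp only: eq)
  also have "\<dots> = integral\<^sup>L lebesgue (\<lambda>x. indicator {0..T+s} x *\<^sub>R F x)"
    by (rule tr_integral[where G="\<lambda>x. indicator {0..T+s} x *\<^sub>R F x"])
  also have "\<dots> = integral\<^sup>L (lebesgue_on {0..T+s}) F"
    by (subst integral_restrict_space) auto
  finally show ?thesis .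
qed

lemma deriv_shift: "deriv (\<lambda>t. g (t + c)) x = deriv g (x + (c::real))"
  by (simp add: deriv_def DERIV_shift)

lemma funpow_deriv_shift: "(deriv ^^ n) (\<lambda>t. g (t + c)) = (\<lambda>t. (deriv ^^ n) g (t + (c::real)))"
proof (induction n)
  case 0
  then show ?case by simp
next
  case (Suc n)
  have "(deriv ^^ Suc n) (\<lambda>t. g (t + c)) = deriv ((deriv ^^ n) (\<lambda>t. g (t + c)))" by simp
  also have "\<dots> = deriv (\<lambda>t. (deriv ^^ n) g (t + c))" by (simp only: Suc.IH)
  also have "\<dots> = (\<lambda>x. deriv ((deriv ^^ n) g) (x + c))" by (rule ext, rule deriv_shift)
  finally show ?case by simp
qed

lemma diff_shift:
  fixes g :: "real \<Rightarrow> real"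
  assumes "g differentiable (at (x + c))"
  shows "(\<lambda>t. g (t + c)) differentiable (at x)"
proof -
  have "(\<lambda>t::real. t + c) differentiable (at x)" by simp
  from differentiable_chain_at[OF this] assms show ?thesis by (simp add: o_def)
qed

lemma outside_tsupp:
  fixes \<psi> :: "real \<Rightarrow> real"
  assumes "y \<notin> tsupp \<psi>"
  shows "\<psi> y = 0" "deriv \<psi> y = 0"
proof -
  have z: "\<And>z. z \<notin> tsupp \<psi> \<Longrightarrow> \<psi> z = 0"
  proof -
    fix z assume "z \<notin> tsupp \<psi>"
    then have "z \<notin> {x. \<psi> x \<noteq> 0}" unfolding tsupp_def by (rule contra_subsetD[OF closure_subset])
    then show "\<psi> z = 0" by simp
  qed
  then show "\<psi> y = 0" using assms .
  have o: "open (- tsupp \<psi>)" unfolding tsupp_def by (rule open_Compl) (rule closed_closure)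
  have "((\<lambda>_. 0) has_field_derivative 0) (at y)" by (rule DERIV_const)
  then have "(\<psi> has_field_derivative 0) (at y)"
  proof (rule has_field_derivative_transform_within_open[OF _ o])
    show "y \<in> - tsupp \<psi>" using assms by simp
    fix x assume "x \<in> - tsupp \<psi>"
    then have "\<psi> x = 0" using z by simp
    then show "0 = \<psi> x" by simp
  qed
  then show "deriv \<psi> y = 0" by (rule DERIV_imp_deriv)
qed

lemma tsupp_shift:
  fixes \<psi> :: "real \<Rightarrow> real"
  shows "tsupp (\<lambda>t. \<psi> (t + - s)) = (+) s ` tsupp \<psi>"
proof -
  have "{x. \<psi> (x + - s) \<noteq> 0} = (+) s ` {y. \<psi> y \<noteq> 0}"
  proof (rule set_eqI, rule iffI)
    fix x assume "x \<in> {x. \<psi> (x + - s) \<noteq> 0}"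
    then have "x + - s \<in> {y. \<psi> y \<noteq> 0}" "x = s + (x + - s)" by auto
    then show "x \<in> (+) s ` {y. \<psi> y \<noteq> 0}" by (rule rev_image_eqI)
  next
    fix x assume "x \<in> (+) s ` {y. \<psi> y \<noteq> 0}"
    then obtain y where "\<psi> y \<noteq> 0" "x = s + y" by blast
    then show "x \<in> {x. \<psi> (x + - s) \<noteq> 0}" by simp
  qed
  then show ?thesis unfolding tsupp_def by (simp only: closure_translation)
qed

lemma test_time_shift:
  assumes "test_time T \<psi>" "s \<ge> 0"
  shows "test_time (T + s) (\<lambda>t. \<psi> (t + - s))"
  unfolding test_time_def
proof (intro conjI allI)
  fix n x
  show "(deriv ^^ n) (\<lambda>t. \<psi> (t + - s)) differentiable at x"
    unfolding funpow_deriv_shift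
    by (rule diff_shift) (use assms(1) in \<open>auto simp: test_time_def\<close>)
next
  show "compact (tsupp (\<lambda>t. \<psi> (t + - s)))"
    unfolding tsupp_shift using assms(1) by (auto simp: test_time_def intro: compact_translation)
next
  show "tsupp (\<lambda>t. \<psi> (t + - s)) \<subseteq> {0<..<T + s}"
    unfolding tsupp_shift using assms by (auto simp: test_time_def)
qed

lemma test_time_vanish:
  assumes "test_time T \<psi>" "0 \<le> t" "t < s"
  shows "\<psi> (t + - s) = 0" "deriv (\<lambda>t. \<psi> (t + - s)) t = 0"
proof -
  have "t + - s \<notin> tsupp \<psi>" using assms by (auto simp: test_time_def)
  note ab = outside_tsupp[OF this]
  show "\<psi> (t + - s) = 0" by (rule ab(1))
  show "deriv (\<lambda>t. \<psi> (t + - s)) t = 0" unfolding deriv_shift by (rule ab(2))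
qed

lemma weak_sols_shift:
  assumes u: "u \<in> weak_sols \<Omega> \<nu> f" and s: "s \<ge> 0"
  shows "(\<lambda>t. u (t + s)) \<in> weak_sols \<Omega> \<nu> f"
  unfolding weak_sols_def mem_Collect_eq
proof (intro allI impI)
  fix T :: real assume T: "T > 0"
  have T': "T + s > 0" using T s by simp
  note H = u[unfolded weak_sols_def mem_Collect_eq, rule_format, OF T']
  note H1 = H[THEN conjunct1]
  note H2 = H[THEN conjunct2, THEN conjunct1]
  note H3 = H[THEN conjunct2, THEN conjunct2, THEN conjunct1]
  note H4 = H[THEN conjunct2, THEN conjunct2, THEN conjunct2, THEN conjunct1]
  note H5 = H[THEN conjunct2, THEN conjunct2, THEN conjunct2, THEN conjunct2, THEN conjunct1]
  note H6 = H[THEN conjunct2, THEN conjunct2, THEN conjunct2, THEN conjunct2, THEN conjunct2, THEN conjunct1]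
  note H7 = H[THEN conjunct2, THEN conjunct2, THEN conjunct2, THEN conjunct2, THEN conjunct2, THEN conjunct2, THEN conjunct1]
  note H8 = H[THEN conjunct2, THEN conjunct2, THEN conjunct2, THEN conjunct2, THEN conjunct2, THEN conjunct2, THEN conjunct2]
  have dsh: "\<And>\<psi> t. deriv (\<lambda>t. \<psi> (t + - s)) (t + s) = deriv \<psi> t"
    unfolding deriv_shift by simp
  show "(\<forall>t\<in>{0..T}. u (t + s) \<in> Hsp \<Omega>) \<and>
     (\<forall>h\<in>Hsp \<Omega>. (\<lambda>t. l2ip \<Omega> (u (t + s)) h) \<in> borel_measurable (lebesgue_on {0..T})) \<and>
     (\<exists>C. AE t in lebesgue_on {0..T}. l2norm \<Omega> (u (t + s)) \<le> C) \<and>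
     (AE t in lebesgue_on {0..T}. u (t + s) \<in> Vsp \<Omega>) \<and>
     (\<forall>\<phi>\<in>Vsp \<Omega>. (\<lambda>t. dir \<Omega> (u (t + s)) \<phi>) \<in> borel_measurable (lebesgue_on {0..T})) \<and>
     integrable (lebesgue_on {0..T}) (\<lambda>t. dir \<Omega> (u (t + s)) (u (t + s))) \<and>
     (\<exists>g::real \<Rightarrow> field3 \<Rightarrow> real.
        (\<forall>t a b \<phi>1 \<phi>2. \<phi>1 \<in> Vsp \<Omega> \<longrightarrow> \<phi>2 \<in> Vsp \<Omega> \<longrightarrow>
            g t (\<lambda>x. a *\<^sub>R \<phi>1 x + b *\<^sub>R \<phi>2 x) = a * g t \<phi>1 + b * g t \<phi>2) \<and>
        (\<forall>t. bdd_above {\<bar>g t \<phi>\<bar> | \<phi>. \<phi> \<in> Vsp \<Omega> \<and> dir \<Omega> \<phi> \<phi> \<le> 1}) \<and>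
        (\<forall>\<phi>\<in>Vsp \<Omega>. (\<lambda>t. g t \<phi>) \<in> borel_measurable (lebesgue_on {0..T})) \<and>
        integrable (lebesgue_on {0..T}) (\<lambda>t. Vdual_norm \<Omega> (g t)) \<and>
        (\<forall>\<phi>\<in>Vsp \<Omega>. \<forall>\<psi>. test_time T \<psi> \<longrightarrow>
            (\<integral>t. l2ip \<Omega> (u (t + s)) \<phi> * deriv \<psi> t \<partial>lebesgue_on {0..T})
              = - (\<integral>t. g t \<phi> * \<psi> t \<partial>lebesgue_on {0..T}))) \<and>
     (\<forall>\<phi>\<in>Vsp \<Omega>. \<forall>\<psi>. test_time T \<psi> \<longrightarrow>
        integrable (lebesgue_on {0..T})
          (\<lambda>t. (- \<nu> * dir \<Omega> (u (t + s)) \<phi> + bform \<Omega> (u (t + s)) \<phi> + l2ip \<Omega> (leray \<Omega> f) \<phi>) * \<psi> t) \<and>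
        - (\<integral>t. l2ip \<Omega> (u (t + s)) \<phi> * deriv \<psi> t \<partial>lebesgue_on {0..T})
          = (\<integral>t. (- \<nu> * dir \<Omega> (u (t + s)) \<phi> + bform \<Omega> (u (t + s)) \<phi> + l2ip \<Omega> (leray \<Omega> f) \<phi>) * \<psi> t
               \<partial>lebesgue_on {0..T}))"
  proof (intro conjI)
    show "\<forall>t\<in>{0..T}. u (t + s) \<in> Hsp \<Omega>" using H1 s by auto
    show "\<forall>h\<in>Hsp \<Omega>. (\<lambda>t. l2ip \<Omega> (u (t + s)) h) \<in> borel_measurable (lebesgue_on {0..T})"
    proof
      fix h assume "h \<in> Hsp \<Omega>"
      with H2 have "(\<lambda>t. l2ip \<Omega> (u t) h) \<in> borel_measurable (lebesgue_on {0..T + s})" by blast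
      from SI_meas[OF this s] show "(\<lambda>t. l2ip \<Omega> (u (t + s)) h) \<in> borel_measurable (lebesgue_on {0..T})" .
    qed
    show "\<exists>C. AE t in lebesgue_on {0..T}. l2norm \<Omega> (u (t + s)) \<le> C"
    proof -
      from H3 obtain C where "AE t in lebesgue_on {0..T + s}. l2norm \<Omega> (u t) \<le> C" by blast
      from SI_AE[OF this s] show ?thesis by blast
    qed
    show "AE t in lebesgue_on {0..T}. u (t + s) \<in> Vsp \<Omega>"
      using SI_AE[OF H4 s] .
    show "\<forall>\<phi>\<in>Vsp \<Omega>. (\<lambda>t. dir \<Omega> (u (t + s)) \<phi>) \<in> borel_measurable (lebesgue_on {0..T})"
    proof
      fix h assume "h \<in> Vsp \<Omega>"
      with H5 have "(\<lambda>t. dir \<Omega> (u t) h) \<in> borel_measurable (lebesgue_on {0..T + s})" by blast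
      from SI_meas[OF this s] show "(\<lambda>t. dir \<Omega> (u (t + s)) h) \<in> borel_measurable (lebesgue_on {0..T})" .
    qed
    show "integrable (lebesgue_on {0..T}) (\<lambda>t. dir \<Omega> (u (t + s)) (u (t + s)))"
      using SI_int[OF H6 s] .
    show "\<forall>\<phi>\<in>Vsp \<Omega>. \<forall>\<psi>. test_time T \<psi> \<longrightarrow>
        integrable (lebesgue_on {0..T})
          (\<lambda>t. (- \<nu> * dir \<Omega> (u (t + s)) \<phi> + bform \<Omega> (u (t + s)) \<phi> + l2ip \<Omega> (leray \<Omega> f) \<phi>) * \<psi> t) \<and>
        - (\<integral>t. l2ip \<Omega> (u (t + s)) \<phi> * deriv \<psi> t \<partial>lebesgue_on {0..T})
          = (\<integral>t. (- \<nu> * dir \<Omega> (u (t + s)) \<phi> + bform \<Omega> (u (t + s)) \<phi> + l2ip \<Omega> (leray \<Omega> f) \<phi>) * \<psi> t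
               \<partial>lebesgue_on {0..T})"
    proof (intro ballI allI impI conjI)
      fix \<phi> \<psi> assume \<phi>: "\<phi> \<in> Vsp \<Omega>" and \<psi>: "test_time T \<psi>"
      define W where "W t = - \<nu> * dir \<Omega> (u t) \<phi> + bform \<Omega> (u t) \<phi> + l2ip \<Omega> (leray \<Omega> f) \<phi>" for t
      have \<psi>': "test_time (T + s) (\<lambda>t. \<psi> (t + - s))" by (rule test_time_shift[OF \<psi> s])
      from H8 \<phi> \<psi>' have I: "integrable (lebesgue_on {0..T + s}) (\<lambda>t. W t * \<psi> (t + - s))"
        and E: "- (\<integral>t. l2ip \<Omega> (u t) \<phi> * deriv (\<lambda>t. \<psi> (t + - s)) t \<partial>lebesgue_on {0..T + s})
          = (\<integral>t. W t * \<psi> (t + - s) \<partial>lebesgue_on {0..T + s})"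
        unfolding W_def by blast+
      from SI_int[OF I s] show "integrable (lebesgue_on {0..T})
          (\<lambda>t. (- \<nu> * dir \<Omega> (u (t + s)) \<phi> + bform \<Omega> (u (t + s)) \<phi> + l2ip \<Omega> (leray \<Omega> f) \<phi>) * \<psi> t)"
        by (simp add: W_def)
      have E1: "(\<integral>t. l2ip \<Omega> (u (t + s)) \<phi> * deriv \<psi> t \<partial>lebesgue_on {0..T})
          = (\<integral>t. l2ip \<Omega> (u t) \<phi> * deriv (\<lambda>t. \<psi> (t + - s)) t \<partial>lebesgue_on {0..T + s})"
      proof -
        have "(\<integral>t. l2ip \<Omega> (u (t + s)) \<phi> * deriv \<psi> t \<partial>lebesgue_on {0..T})
          = (\<integral>t. l2ip \<Omega> (u (t + s)) \<phi> * deriv (\<lambda>t. \<psi> (t + - s)) (t + s) \<partial>lebesgue_on {0..T})"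
          by (simp only: dsh)
        also have "\<dots> = (\<integral>t. l2ip \<Omega> (u t) \<phi> * deriv (\<lambda>t. \<psi> (t + - s)) t \<partial>lebesgue_on {0..T + s})"
          by (rule SI_integral[where F="\<lambda>t. l2ip \<Omega> (u t) \<phi> * deriv (\<lambda>t. \<psi> (t + - s)) t", OF _ s])
             (metis test_time_vanish[OF \<psi>] mult_zero_left mult_zero_right)
        finally show ?thesis .
      qed
      have E2: "(\<integral>t. W (t + s) * \<psi> t \<partial>lebesgue_on {0..T})
          = (\<integral>t. W t * \<psi> (t + - s) \<partial>lebesgue_on {0..T + s})"
      proof -
        have "(\<integral>t. W (t + s) * \<psi> t \<partial>lebesgue_on {0..T})
          = (\<integral>t. W (t + s) * \<psi> ((t + s) + - s) \<partial>lebesgue_on {0..T})"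
          by simp
        also have "\<dots> = (\<integral>t. W t * \<psi> (t + - s) \<partial>lebesgue_on {0..T + s})"
          by (rule SI_integral[where F="\<lambda>t. W t * \<psi> (t + - s)", OF _ s])
             (metis test_time_vanish[OF \<psi>] mult_zero_left mult_zero_right)
        finally show ?thesis .
      qed
      show "- (\<integral>t. l2ip \<Omega> (u (t + s)) \<phi> * deriv \<psi> t \<partial>lebesgue_on {0..T})
          = (\<integral>t. (- \<nu> * dir \<Omega> (u (t + s)) \<phi> + bform \<Omega> (u (t + s)) \<phi> + l2ip \<Omega> (leray \<Omega> f) \<phi>) * \<psi> t
               \<partial>lebesgue_on {0..T})"
        using E E1 E2 unfolding W_def by simp
    qed
    show "\<exists>g::real \<Rightarrow> field3 \<Rightarrow> real.
        (\<forall>t a b \<phi>1 \<phi>2. \<phi>1 \<in> Vsp \<Omega> \<longrightarrow> \<phi>2 \<in> Vsp \<Omega> \<longrightarrow>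
            g t (\<lambda>x. a *\<^sub>R \<phi>1 x + b *\<^sub>R \<phi>2 x) = a * g t \<phi>1 + b * g t \<phi>2) \<and>
        (\<forall>t. bdd_above {\<bar>g t \<phi>\<bar> | \<phi>. \<phi> \<in> Vsp \<Omega> \<and> dir \<Omega> \<phi> \<phi> \<le> 1}) \<and>
        (\<forall>\<phi>\<in>Vsp \<Omega>. (\<lambda>t. g t \<phi>) \<in> borel_measurable (lebesgue_on {0..T})) \<and>
        integrable (lebesgue_on {0..T}) (\<lambda>t. Vdual_norm \<Omega> (g t)) \<and>
        (\<forall>\<phi>\<in>Vsp \<Omega>. \<forall>\<psi>. test_time T \<psi> \<longrightarrow>
            (\<integral>t. l2ip \<Omega> (u (t + s)) \<phi> * deriv \<psi> t \<partial>lebesgue_on {0..T})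
              = - (\<integral>t. g t \<phi> * \<psi> t \<partial>lebesgue_on {0..T}))"
    proof -
      from H7 obtain g :: "real \<Rightarrow> field3 \<Rightarrow> real" where
        G1: "\<forall>t a b \<phi>1 \<phi>2. \<phi>1 \<in> Vsp \<Omega> \<longrightarrow> \<phi>2 \<in> Vsp \<Omega> \<longrightarrow>
            g t (\<lambda>x. a *\<^sub>R \<phi>1 x + b *\<^sub>R \<phi>2 x) = a * g t \<phi>1 + b * g t \<phi>2" and
        G2: "\<forall>t. bdd_above {\<bar>g t \<phi>\<bar> | \<phi>. \<phi> \<in> Vsp \<Omega> \<and> dir \<Omega> \<phi> \<phi> \<le> 1}" and
        G3: "\<forall>\<phi>\<in>Vsp \<Omega>. (\<lambda>t. g t \<phi>) \<in> borel_measurable (lebesgue_on {0..T + s})" and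
        G4: "integrable (lebesgue_on {0..T + s}) (\<lambda>t. Vdual_norm \<Omega> (g t))" and
        G5: "\<forall>\<phi>\<in>Vsp \<Omega>. \<forall>\<psi>. test_time (T + s) \<psi> \<longrightarrow>
            (\<integral>t. l2ip \<Omega> (u t) \<phi> * deriv \<psi> t \<partial>lebesgue_on {0..T + s})
              = - (\<integral>t. g t \<phi> * \<psi> t \<partial>lebesgue_on {0..T + s})"
        by blast
      show ?thesis
      proof (rule exI[where x="\<lambda>t. g (t + s)"], intro conjI)
        show "\<forall>t a b \<phi>1 \<phi>2. \<phi>1 \<in> Vsp \<Omega> \<longrightarrow> \<phi>2 \<in> Vsp \<Omega> \<longrightarrow>
            g (t + s) (\<lambda>x. a *\<^sub>R \<phi>1 x + b *\<^sub>R \<phi>2 x) = a * g (t + s) \<phi>1 + b * g (t + s) \<phi>2"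
          using G1 by blast
        show "\<forall>t. bdd_above {\<bar>g (t + s) \<phi>\<bar> | \<phi>. \<phi> \<in> Vsp \<Omega> \<and> dir \<Omega> \<phi> \<phi> \<le> 1}"
          using G2 by (intro allI) (rule spec)
        show "\<forall>\<phi>\<in>Vsp \<Omega>. (\<lambda>t. g (t + s) \<phi>) \<in> borel_measurable (lebesgue_on {0..T})"
        proof
          fix h assume "h \<in> Vsp \<Omega>"
          with G3 have "(\<lambda>t. g t h) \<in> borel_measurable (lebesgue_on {0..T + s})" by blast
          from SI_meas[OF this s] show "(\<lambda>t. g (t + s) h) \<in> borel_measurable (lebesgue_on {0..T})" .
        qed
        show "integrable (lebesgue_on {0..T}) (\<lambda>t. Vdual_norm \<Omega> (g (t + s)))"
          using SI_int[OF G4 s] .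
        show "\<forall>\<phi>\<in>Vsp \<Omega>. \<forall>\<psi>. test_time T \<psi> \<longrightarrow>
            (\<integral>t. l2ip \<Omega> (u (t + s)) \<phi> * deriv \<psi> t \<partial>lebesgue_on {0..T})
              = - (\<integral>t. g (t + s) \<phi> * \<psi> t \<partial>lebesgue_on {0..T})"
        proof (intro ballI allI impI)
          fix \<phi> \<psi> assume \<phi>: "\<phi> \<in> Vsp \<Omega>" and \<psi>: "test_time T \<psi>"
          have \<psi>': "test_time (T + s) (\<lambda>t. \<psi> (t + - s))" by (rule test_time_shift[OF \<psi> s])
          from G5 \<phi> \<psi>' have E: "(\<integral>t. l2ip \<Omega> (u t) \<phi> * deriv (\<lambda>t. \<psi> (t + - s)) t \<partial>lebesgue_on {0..T + s})
              = - (\<integral>t. g t \<phi> * \<psi> (t + - s) \<partial>lebesgue_on {0..T + s})" by blast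
          have E1: "(\<integral>t. l2ip \<Omega> (u (t + s)) \<phi> * deriv \<psi> t \<partial>lebesgue_on {0..T})
              = (\<integral>t. l2ip \<Omega> (u t) \<phi> * deriv (\<lambda>t. \<psi> (t + - s)) t \<partial>lebesgue_on {0..T + s})"
          proof -
            have "(\<integral>t. l2ip \<Omega> (u (t + s)) \<phi> * deriv \<psi> t \<partial>lebesgue_on {0..T})
              = (\<integral>t. l2ip \<Omega> (u (t + s)) \<phi> * deriv (\<lambda>t. \<psi> (t + - s)) (t + s) \<partial>lebesgue_on {0..T})"
              by (simp only: dsh)
            also have "\<dots> = (\<integral>t. l2ip \<Omega> (u t) \<phi> * deriv (\<lambda>t. \<psi> (t + - s)) t \<partial>lebesgue_on {0..T + s})"
              by (rule SI_integral[where F="\<lambda>t. l2ip \<Omega> (u t) \<phi> * deriv (\<lambda>t. \<psi> (t + - s)) t", OF _ s])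
                 (metis test_time_vanish[OF \<psi>] mult_zero_left mult_zero_right)
            finally show ?thesis .
          qed
          have E2: "(\<integral>t. g (t + s) \<phi> * \<psi> t \<partial>lebesgue_on {0..T})
              = (\<integral>t. g t \<phi> * \<psi> (t + - s) \<partial>lebesgue_on {0..T + s})"
          proof -
            have "(\<integral>t. g (t + s) \<phi> * \<psi> t \<partial>lebesgue_on {0..T})
              = (\<integral>t. g (t + s) \<phi> * \<psi> ((t + s) + - s) \<partial>lebesgue_on {0..T})"
              by simp
            also have "\<dots> = (\<integral>t. g t \<phi> * \<psi> (t + - s) \<partial>lebesgue_on {0..T + s})"
              by (rule SI_integral[where F="\<lambda>t. g t \<phi> * \<psi> (t + - s)", OF _ s])
                 (metis test_time_vanish[OF \<psi>] mult_zero_left mult_zero_right)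
            finally show ?thesis .
          qed
          show "(\<integral>t. l2ip \<Omega> (u (t + s)) \<phi> * deriv \<psi> t \<partial>lebesgue_on {0..T})
              = - (\<integral>t. g (t + s) \<phi> * \<psi> t \<partial>lebesgue_on {0..T})"
            using E E1 E2 by simp
        qed
      qed
    qed
  qed
qed


theorem lemma4p6:
  fixes \<Omega> :: "(real^3) set" and \<nu> :: real and f :: field3
    and u :: "real \<Rightarrow> field3" and s :: real
  assumes "smooth_bounded_domain \<Omega>" and "\<nu> > 0" and "L2field \<Omega> f"
    and "fsig_bounded \<Omega> f"
    and "u \<in> KN \<Omega> \<nu> f" and "u 0 \<in> attractor \<Omega> \<nu> f" and "s > 0"
  shows "(\<lambda>t. u (t + s)) \<in> KN \<Omega> \<nu> f"
proof -
  have s0: "s \<ge> 0" using assms(7) by simp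
  note K = assms(5)[unfolded KN_def mem_Collect_eq]
  have W: "u \<in> weak_sols \<Omega> \<nu> f" using K by (rule conjunct1)
  have "\<exists>(t::nat \<Rightarrow> real) (u0::nat \<Rightarrow> field3) (Ns::nat \<Rightarrow> real) (S::nat \<Rightarrow> real \<Rightarrow> field3).
         (\<forall>j. t j \<ge> 0) \<and> filterlim t at_top sequentially \<and>
         (\<forall>j. u0 j \<in> B0 \<Omega> \<nu> f) \<and> (\<forall>j. Ns j > 0) \<and> filterlim Ns at_top sequentially \<and>
         (\<forall>j. mild_sol \<Omega> \<nu> f (Ns j) (u0 j) (S j)) \<and>
         (\<forall>t0\<ge>0. \<forall>s::nat \<Rightarrow> real. (\<forall>j. s j \<ge> 0) \<and> s \<longlonglongrightarrow> t0 \<longrightarrow>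
            wconv \<Omega> (\<lambda>j. S j (s j + t j)) (u t0))"
    using K[THEN conjunct2] assms(6)
    apply (elim disjE conjE DiffE)
     apply assumption
    apply (erule notE, assumption)
    done
  then obtain t :: "nat \<Rightarrow> real" and u0 :: "nat \<Rightarrow> field3" and Ns :: "nat \<Rightarrow> real"
    and S :: "nat \<Rightarrow> real \<Rightarrow> field3" where
    t0: "\<forall>j. t j \<ge> 0" and t1: "filterlim t at_top sequentially" and
    u0: "\<forall>j. u0 j \<in> B0 \<Omega> \<nu> f" and N0: "\<forall>j. Ns j > 0" and N1: "filterlim Ns at_top sequentially" and
    M: "\<forall>j. mild_sol \<Omega> \<nu> f (Ns j) (u0 j) (S j)" and
    C: "\<forall>t0\<ge>0. \<forall>s::nat \<Rightarrow> real. (\<forall>j. s j \<ge> 0) \<and> s \<longlonglongrightarrow> t0 \<longrightarrow>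
            wconv \<Omega> (\<lambda>j. S j (s j + t j)) (u t0)"
    by blast
  define t' where "t' j = s + t j" for j
  have t'0: "\<forall>j. t' j \<ge> 0" using t0 s0 by (simp add: t'_def)
  have t'1: "filterlim t' at_top sequentially"
    unfolding t'_def by (rule filterlim_tendsto_add_at_top[OF tendsto_const t1])
  have C': "\<forall>t0\<ge>0. \<forall>sq::nat \<Rightarrow> real. (\<forall>j. sq j \<ge> 0) \<and> sq \<longlonglongrightarrow> t0 \<longrightarrow>
            wconv \<Omega> (\<lambda>j. S j (sq j + t' j)) (u (t0 + s))"
  proof (intro allI impI)
    fix t0 :: real and sq :: "nat \<Rightarrow> real"
    assume a: "t0 \<ge> 0" and b: "(\<forall>j. sq j \<ge> 0) \<and> sq \<longlonglongrightarrow> t0"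
    have "t0 + s \<ge> 0" using a s0 by simp
    moreover have "(\<forall>j. sq j + s \<ge> 0) \<and> (\<lambda>j. sq j + s) \<longlonglongrightarrow> t0 + s"
      using b s0 by (auto intro: tendsto_add)
    ultimately have "wconv \<Omega> (\<lambda>j. S j ((sq j + s) + t j)) (u (t0 + s))"
      by (rule C[rule_format])
    moreover have "(\<lambda>j. S j ((sq j + s) + t j)) = (\<lambda>j. S j (sq j + t' j))"
      by (simp add: t'_def add.assoc)
    ultimately show "wconv \<Omega> (\<lambda>j. S j (sq j + t' j)) (u (t0 + s))" by simp
  qed
  have ws: "wconv \<Omega> (\<lambda>j. S j (t' j)) (u s)"
  proof -
    have "wconv \<Omega> (\<lambda>j. S j ((\<lambda>_. 0) j + t' j)) (u (0 + s))"
      using C'[rule_format, of 0 "\<lambda>_. 0"] by simp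
    then show ?thesis by simp
  qed
  have att: "u s \<in> attractor \<Omega> \<nu> f"
    unfolding attractor_def mem_Collect_eq
  proof
    show "u s \<in> Hsp \<Omega>" using ws unfolding wconv_def by blast
    show "\<exists>(t::nat \<Rightarrow> real) (u0::nat \<Rightarrow> field3) (Ns::nat \<Rightarrow> real) (S::nat \<Rightarrow> real \<Rightarrow> field3).
      (\<forall>j. t j \<ge> 0) \<and> filterlim t at_top sequentially \<and>
      (\<forall>j. u0 j \<in> B0 \<Omega> \<nu> f) \<and> (\<forall>j. Ns j > 0) \<and> filterlim Ns at_top sequentially \<and>
      (\<forall>j. mild_sol \<Omega> \<nu> f (Ns j) (u0 j) (S j)) \<and>
      wconv \<Omega> (\<lambda>j. S j (t j)) (u s)"
      apply (rule exI[of _ t'], rule exI[of _ u0], rule exI[of _ Ns], rule exI[of _ S])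
      using t'0 t'1 u0 N0 N1 M ws by (intro conjI)
  qed
  have first: "(\<lambda>t. u (t + s)) 0 \<in> attractor \<Omega> \<nu> f \<and>
       (\<exists>(t::nat \<Rightarrow> real) (u0::nat \<Rightarrow> field3) (Ns::nat \<Rightarrow> real) (S::nat \<Rightarrow> real \<Rightarrow> field3).
         (\<forall>j. t j \<ge> 0) \<and> filterlim t at_top sequentially \<and>
         (\<forall>j. u0 j \<in> B0 \<Omega> \<nu> f) \<and> (\<forall>j. Ns j > 0) \<and> filterlim Ns at_top sequentially \<and>
         (\<forall>j. mild_sol \<Omega> \<nu> f (Ns j) (u0 j) (S j)) \<and>
         (\<forall>t0\<ge>0. \<forall>sq::nat \<Rightarrow> real. (\<forall>j. sq j \<ge> 0) \<and> sq \<longlonglongrightarrow> t0 \<longrightarrow>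
            wconv \<Omega> (\<lambda>j. S j (sq j + t j)) ((\<lambda>t. u (t + s)) t0)))"
  proof
    show "(\<lambda>t. u (t + s)) 0 \<in> attractor \<Omega> \<nu> f" using att by simp
    show "\<exists>(t::nat \<Rightarrow> real) (u0::nat \<Rightarrow> field3) (Ns::nat \<Rightarrow> real) (S::nat \<Rightarrow> real \<Rightarrow> field3).
         (\<forall>j. t j \<ge> 0) \<and> filterlim t at_top sequentially \<and>
         (\<forall>j. u0 j \<in> B0 \<Omega> \<nu> f) \<and> (\<forall>j. Ns j > 0) \<and> filterlim Ns at_top sequentially \<and>
         (\<forall>j. mild_sol \<Omega> \<nu> f (Ns j) (u0 j) (S j)) \<and>
         (\<forall>t0\<ge>0. \<forall>sq::nat \<Rightarrow> real. (\<forall>j. sq j \<ge> 0) \<and> sq \<longlonglongrightarrow> t0 \<longrightarrow>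
            wconv \<Omega> (\<lambda>j. S j (sq j + t j)) ((\<lambda>t. u (t + s)) t0))"
      apply (rule exI[of _ t'], rule exI[of _ u0], rule exI[of _ Ns], rule exI[of _ S])
      using t'0 t'1 u0 N0 N1 M C' by (intro conjI) simp_all
  qed
  show ?thesis
    unfolding KN_def mem_Collect_eq
    by (rule conjI[OF weak_sols_shift[OF W s0] disjI1[OF first]])
qed

end
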